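(* Let $\alpha\in(0,1)$, $\gamma,\beta>0$, $r_0>0$, $Y=B(0,r_0)\subset\mathbb R\oplus\mathbb R^{d-1}$, $\mathcal X(x)=\|x\|^\alpha Ax$ with $A=\gamma\,\mathrm{Id}_{\mathbb R}\oplus(-\beta\,\mathrm{Id}_{\mathbb R^{d-1}})$. Let $x\colon[0,T_0]\to Y$ be a trajectory of $\mathcal X$ that leaves $Y$ at time $T_0$, $\theta(t)$ the angle between $x(t)$ and $\mathbb R\times\{0\}$, and $s\in(0,\infty)$ with $\tan\theta(0)>s>\tan\theta(T_0)$; let $T_s$ be the time with $\tan\theta(T_s)=s$. Then $\int_{T_s}^{T_0}\|x\|^\alpha\tan\theta\,dt\le\frac{s}{\gamma+\beta}$. *)

theory Defs
  imports "HOL-Analysis.Analysis"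
begin

text \<open>Points of R^d = R (+) R^(d-1) are pairs (u, v) with u :: real, v :: real^'n
  (d - 1 = CARD('n) \<ge> 1). The norm on the product type is the Euclidean one.\<close>

definition hyp_field :: "real \<Rightarrow> real \<Rightarrow> real \<Rightarrow> real \<times> (real^'n) \<Rightarrow> real \<times> (real^'n)" where
  "hyp_field \<alpha> \<gamma> \<beta> x = (norm x powr \<alpha>) *\<^sub>R (\<gamma> * fst x, (- \<beta>) *\<^sub>R snd x)"

definition axis_angle :: "real \<times> (real^'n) \<Rightarrow> real" where
  "axis_angle x = arccos (\<bar>fst x\<bar> / norm x)"

end

theory Submission imports Defs begin
lemma tan_axis0: "fst z = 0 \<Longrightarrow> tan (axis_angle z) = 0"
  by (simp add: axis_angle_def)

lemma tan_axis:
  fixes z :: "real \<times> (real^'n)"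
  assumes "fst z \<noteq> 0"
  shows "tan (axis_angle z) = norm (snd z) / \<bar>fst z\<bar>"
proof -
  obtain a b where z: "z = (a,b)" by (cases z)
  have a: "a \<noteq> 0" using assms z by simp
  have nz: "norm z = sqrt (a^2 + (norm b)^2)" using z by (simp add: norm_Pair)
  have npos: "norm z > 0" using nz a by (simp add: add_pos_nonneg)
  define c where "c = \<bar>a\<bar> / norm z"
  have "\<bar>a\<bar> \<le> norm z" using z norm_fst_le[of a b] by simp
  hence c1: "c \<le> 1" "c > 0" using npos a by (auto simp: c_def)
  have cc: "cos (arccos c) = c" using c1 by (intro cos_arccos) auto
  have nz2: "(norm z)^2 = a^2 + (norm b)^2" using nz by simp
  have "1 - c^2 = (norm b)^2 / (norm z)^2"
    using npos nz2 a by (simp add: c_def power_divide divide_simps)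
  hence "sin (arccos c) = sqrt ((norm b)^2 / (norm z)^2)"
    using c1 by (simp add: sin_arccos)
  hence ss: "sin (arccos c) = norm b / norm z"
    by (simp add: real_sqrt_divide)
  have "axis_angle z = arccos c" using z by (simp add: axis_angle_def c_def)
  hence "tan (axis_angle z) = (norm b / norm z) / c" using cc ss by (simp add: tan_def)
  also have "\<dots> = norm b / \<bar>a\<bar>" using npos a by (simp add: c_def)
  finally show ?thesis using z by simp
qed
lemma hvd_fst: "(f has_vector_derivative f') F \<Longrightarrow> ((\<lambda>t. fst (f t)) has_vector_derivative fst f') F"
  using has_derivative_fst[of f "\<lambda>h. h *\<^sub>R f'" F] by (simp add: has_vector_derivative_def)
lemma hvd_snd: "(f has_vector_derivative f') F \<Longrightarrow> ((\<lambda>t. snd (f t)) has_vector_derivative snd f') F"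
  using has_derivative_snd[of f "\<lambda>h. h *\<^sub>R f'" F] by (simp add: has_vector_derivative_def)

lemma dzero1:
  assumes dE: "(E has_field_derivative p) (at t within S)"
  and du: "(u has_field_derivative p * (g * u t)) (at t within S)"
  shows "((\<lambda>t. exp (- g * E t) * u t) has_field_derivative 0) (at t within S)"
proof -
  have e: "((\<lambda>t. exp (- g * E t)) has_field_derivative exp (- g * E t) * (- g * p)) (at t within S)"
    by (rule DERIV_chain2[OF DERIV_exp DERIV_cmult[OF dE]])
  show ?thesis
    by (rule DERIV_cong[OF DERIV_mult[OF e du]]) (simp add: algebra_simps)
qed
lemma dzero2:
  fixes v :: "real \<Rightarrow> 'a::real_normed_vector"
  assumes dE: "(E has_field_derivative p) (at t within S)"
  and dv: "(v has_vector_derivative p *\<^sub>R ((- b) *\<^sub>R v t)) (at t within S)"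
  shows "((\<lambda>t. exp (b * E t) *\<^sub>R v t) has_vector_derivative 0) (at t within S)"
proof -
  have e: "((\<lambda>t. exp (b * E t)) has_field_derivative exp (b * E t) * (b * p)) (at t within S)"
    by (rule DERIV_chain2[OF DERIV_exp DERIV_cmult[OF dE]])
  have "((\<lambda>t. exp (b * E t) *\<^sub>R v t) has_vector_derivative
     exp (b * E t) *\<^sub>R (p *\<^sub>R ((- b) *\<^sub>R v t)) + (exp (b * E t) * (b * p)) *\<^sub>R v t) (at t within S)"
    by (rule has_vector_derivative_scaleR[OF e dv])
  thus ?thesis by (simp add: algebra_simps)
qed

theorem lemma7p4:
  fixes x :: "real \<Rightarrow> real \<times> (real^'n)"
    and \<alpha> \<gamma> \<beta> r0 T0 s Ts :: real
  assumes "0 < \<alpha>" "\<alpha> < 1" "0 < \<gamma>" "0 < \<beta>" "0 < r0"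
    and traj: "\<And>t. t \<in> {0..T0} \<Longrightarrow>
                 (x has_vector_derivative hyp_field \<alpha> \<gamma> \<beta> (x t)) (at t within {0..T0})"
    and inY: "\<And>t. t \<in> {0..<T0} \<Longrightarrow> x t \<in> ball 0 r0"
    and leaves: "norm (x T0) = r0"
    and "0 < s"
    and "tan (axis_angle (x 0)) > s" "s > tan (axis_angle (x T0))"
    and "Ts \<in> {0..T0}" "tan (axis_angle (x Ts)) = s"
  shows "integral {Ts..T0} (\<lambda>t. norm (x t) powr \<alpha> * tan (axis_angle (x t))) \<le> s / (\<gamma> + \<beta>)"
proof -
  have T0: "0 \<le> T0" "0 \<le> Ts" "Ts \<le> T0" using assms(12) by auto
  have contx: "continuous_on {0..T0} x"
    using traj has_vector_derivative_continuous continuous_on_eq_continuous_within by blast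
  define p where "p t = norm (x t) powr \<alpha>" for t
  have contp: "continuous_on {0..T0} p"
    unfolding p_def using assms(1)
    by (intro continuous_on_powr' continuous_on_norm contx continuous_on_const) auto
  define E where "E t = integral {0..t} p" for t
  have dE: "(E has_field_derivative p t) (at t within {0..T0})" if "t \<in> {0..T0}" for t
    using integral_has_vector_derivative[OF contp that]
    by (simp add: E_def[abs_def] has_real_derivative_iff_has_vector_derivative)
  have E0: "E 0 = 0" by (simp add: E_def)
  have du: "((\<lambda>t. fst (x t)) has_field_derivative p t * (\<gamma> * fst (x t))) (at t within {0..T0})"
    if "t \<in> {0..T0}" for t
    using hvd_fst[OF traj[OF that]]
    by (simp add: hyp_field_def p_def has_real_derivative_iff_has_vector_derivative)
  have dv: "((\<lambda>t. snd (x t)) has_vector_derivative p t *\<^sub>R ((- \<beta>) *\<^sub>R snd (x t))) (at t within {0..T0})"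
    if "t \<in> {0..T0}" for t
    using hvd_snd[OF traj[OF that]]
    by (simp add: hyp_field_def p_def)
  have "((\<lambda>t. exp (- \<gamma> * E t) * fst (x t)) has_field_derivative 0) (at t within {0..T0})"
    if "t \<in> {0..T0}" for t
    by (rule dzero1[OF dE[OF that] du[OF that]])
  hence "\<exists>c. \<forall>t\<in>{0..T0}. exp (- \<gamma> * E t) * fst (x t) = c"
    by (intro has_field_derivative_zero_constant) auto
  then obtain c1 where c1: "\<And>t. t \<in> {0..T0} \<Longrightarrow> exp (- \<gamma> * E t) * fst (x t) = c1"
    by blast
  have uform: "fst (x t) = exp (\<gamma> * E t) * fst (x 0)" if "t \<in> {0..T0}" for t
  proof -
    have "exp (- \<gamma> * E t) * fst (x t) = exp (- \<gamma> * E 0) * fst (x 0)"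
      using c1[OF that] c1[of 0] T0 by simp
    thus ?thesis using E0 by (simp add: exp_minus field_simps)
  qed
  have "((\<lambda>t. exp (\<beta> * E t) *\<^sub>R snd (x t)) has_vector_derivative 0) (at t within {0..T0})"
    if "t \<in> {0..T0}" for t
    by (rule dzero2[OF dE[OF that] dv[OF that]])
  hence "\<exists>c. \<forall>t\<in>{0..T0}. exp (\<beta> * E t) *\<^sub>R snd (x t) = c"
    by (intro has_derivative_zero_constant) (auto simp: has_vector_derivative_def)
  then obtain c2 where c2: "\<And>t. t \<in> {0..T0} \<Longrightarrow> exp (\<beta> * E t) *\<^sub>R snd (x t) = c2"
    by blast
  have vform: "norm (snd (x t)) = exp (- \<beta> * E t) * norm (snd (x 0))" if "t \<in> {0..T0}" for t
  proof -
    have "exp (\<beta> * E t) *\<^sub>R snd (x t) = exp (\<beta> * E 0) *\<^sub>R snd (x 0)"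
      using c2[OF that] c2[of 0] T0 by simp
    hence "norm (exp (\<beta> * E t) *\<^sub>R snd (x t)) = norm (snd (x 0))"
      using E0 by simp
    hence h: "exp (\<beta> * E t) * norm (snd (x t)) = norm (snd (x 0))"
      by simp
    have e: "exp (- \<beta> * E t) * exp (\<beta> * E t) = 1" by (simp add: exp_add[symmetric])
    have "norm (snd (x t)) = (exp (- \<beta> * E t) * exp (\<beta> * E t)) * norm (snd (x t))"
      using e by simp
    also have "\<dots> = exp (- \<beta> * E t) * (exp (\<beta> * E t) * norm (snd (x t)))"
      by (simp only: mult.assoc)
    finally show ?thesis using h by simp
  qed
  have u0: "fst (x 0) \<noteq> 0"
  proof
    assume "fst (x 0) = 0"
    hence "tan (axis_angle (x 0)) = 0" by (rule tan_axis0)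
    thus False using assms(9,10) by simp
  qed
  define C where "C = norm (snd (x 0)) / \<bar>fst (x 0)\<bar>"
  have C: "C \<ge> 0" by (simp add: C_def)
  have tanf: "tan (axis_angle (x t)) = C * exp (- (\<gamma> + \<beta>) * E t)" if "t \<in> {0..T0}" for t
  proof -
    have "fst (x t) \<noteq> 0" using uform[OF that] u0 by simp
    hence "tan (axis_angle (x t)) = norm (snd (x t)) / \<bar>fst (x t)\<bar>" by (rule tan_axis)
    also have "\<dots> = exp (- \<beta> * E t) * norm (snd (x 0)) / (exp (\<gamma> * E t) * \<bar>fst (x 0)\<bar>)"
      using uform[OF that] vform[OF that] by (simp add: abs_mult)
    also have "\<dots> = C * exp (- (\<gamma> + \<beta>) * E t)"
    proof -
      have "exp (- (\<gamma> + \<beta>) * E t) = exp (- \<beta> * E t) / exp (\<gamma> * E t)"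
        by (simp add: exp_diff[symmetric] algebra_simps)
      thus ?thesis by (simp add: C_def ac_simps)
    qed
    finally show ?thesis .
  qed
  define G where "G t = - C / (\<gamma> + \<beta>) * exp (- (\<gamma> + \<beta>) * E t)" for t
  have dG: "(G has_vector_derivative (norm (x t) powr \<alpha> * tan (axis_angle (x t)))) (at t within {Ts..T0})"
    if "t \<in> {Ts..T0}" for t
  proof -
    have t: "t \<in> {0..T0}" using that T0 by auto
    have "(G has_field_derivative (p t * (C * exp (- (\<gamma> + \<beta>) * E t)))) (at t within {0..T0})"
      unfolding G_def
      by (rule DERIV_cong[OF DERIV_cmult[OF DERIV_chain2[OF DERIV_exp DERIV_cmult[OF dE[OF t]]]]]) (use assms(3,4) in \<open>simp add: field_simps\<close>)
    hence "(G has_field_derivative (p t * (C * exp (- (\<gamma> + \<beta>) * E t)))) (at t within {Ts..T0})"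
      by (rule DERIV_subset) (use T0 in auto)
    thus ?thesis using tanf[OF t]
      by (simp add: has_real_derivative_iff_has_vector_derivative p_def)
  qed
  have "((\<lambda>t. norm (x t) powr \<alpha> * tan (axis_angle (x t))) has_integral (G T0 - G Ts)) {Ts..T0}"
    by (rule fundamental_theorem_of_calculus[OF T0(3) dG])
  hence I: "integral {Ts..T0} (\<lambda>t. norm (x t) powr \<alpha> * tan (axis_angle (x t))) = G T0 - G Ts"
    by (rule integral_unique)
  have tT0: "tan (axis_angle (x T0)) = C * exp (- (\<gamma> + \<beta>) * E T0)" using tanf T0 by simp
  have tTs: "tan (axis_angle (x Ts)) = C * exp (- (\<gamma> + \<beta>) * E Ts)" using tanf T0 by simp
  have "G T0 - G Ts = (C * exp (- (\<gamma> + \<beta>) * E Ts) - C * exp (- (\<gamma> + \<beta>) * E T0)) / (\<gamma> + \<beta>)"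
    unfolding G_def by (simp add: diff_divide_distrib)
  also have "\<dots> = (s - tan (axis_angle (x T0))) / (\<gamma> + \<beta>)"
    using tT0 tTs assms(13) by simp
  also have "\<dots> \<le> s / (\<gamma> + \<beta>)"
  proof (rule divide_right_mono)
    show "s - tan (axis_angle (x T0)) \<le> s" using tT0 C by simp
    show "0 \<le> \<gamma> + \<beta>" using assms(3,4) by simp
  qed
  finally show ?thesis using I by simp
qed
end
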